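(* Let $n\ge2$, let $\mathbf{p}=(p_1,\dots,p_n)$ be positive weights with $\sum p_i=1$ and let $\mathbf{x}=(x_1,\dots,x_n)$ be positive reals, not all equal. Define, for $s\in\mathbb{R}$, $$\chi_s(\mathbf p,\mathbf x)=\begin{cases}\dfrac{\sum p_i x_i^s-\left(\sum p_i x_i\right)^s}{s(s-1)}, & s\neq 0,1,\\[2mm] \log\left(\sum p_i x_i\right)-\sum p_i\log x_i, & s=0,\\[1mm] \sum p_i x_i\log x_i-\left(\sum p_ix_i\right)\log\left(\sum p_i x_i\right), & s=1.\end{cases}$$ Then $\chi_s(\mathbf p,\mathbf x)>0$ for all $s$, and the function $s\mapsto \chi_{s+1}(\mathbf p,\mathbf x)/\chi_s(\mathbf p,\mathbf x)$ is monotone increasing on $\mathbb{R}$. Equivalently, for every $s\in\mathbb{R}$ and $r>0$, $$\chi_s(\mathbf p,\mathbf x)\,\chi_{s+r+1}(\mathbf p,\mathbf x)\ge \chi_{s+1}(\mathbf p,\mathbf x)\,\chi_{s+r}(\mathbf p,\mathbf x).$$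
   Context: All sums run over $i=1,\dots,n$. *)

theory Defs
  imports Complex_Main
begin

definition chi :: "nat \<Rightarrow> (nat \<Rightarrow> real) \<Rightarrow> (nat \<Rightarrow> real) \<Rightarrow> real \<Rightarrow> real" where
  "chi n p x s =
    (if s = 0 then ln (\<Sum>i=1..n. p i * x i) - (\<Sum>i=1..n. p i * ln (x i))
     else if s = 1 then (\<Sum>i=1..n. p i * x i * ln (x i))
                        - (\<Sum>i=1..n. p i * x i) * ln (\<Sum>i=1..n. p i * x i)
     else ((\<Sum>i=1..n. p i * x i powr s) - (\<Sum>i=1..n. p i * x i) powr s) / (s * (s - 1)))"

end

theory Submission
  imports Defs "HOL-Analysis.Convex"
begin


lemma tangent:
  fixes g g' g'' :: "real \<Rightarrow> real"
  assumes d1: "\<And>y. y>0 \<Longrightarrow> (g has_real_derivative g' y) (at y)"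
    and d2: "\<And>y. y>0 \<Longrightarrow> (g' has_real_derivative g'' y) (at y)"
    and c: "c>0" and y: "y>0" and ne: "y \<noteq> c"
  shows "\<exists>w>0. \<exists>k>0. g y - g c - g' c * (y - c) = k * g'' w"
proof (cases "c < y")
  case True
  obtain z where z: "c < z" "z < y" "g y - g c = (y - c) * g' z"
    using MVT2[OF True, of g g'] d1 c by force
  obtain w where w: "c < w" "w < z" "g' z - g' c = (z - c) * g'' w"
    using MVT2[OF z(1), of g' g''] d2 c by force
  have "g y - g c - g' c * (y - c) = (y - c) * (g' z - g' c)"
    using z(3) by (simp add: algebra_simps)
  also have "\<dots> = ((y - c) * (z - c)) * g'' w" using w(3) by simp
  finally have "g y - g c - g' c * (y - c) = ((y - c) * (z - c)) * g'' w" .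
  moreover have "(y - c) * (z - c) > 0" using True z by simp
  ultimately show ?thesis using w c by (intro exI[of _ w] conjI exI[of _ "(y - c) * (z - c)"]) auto
next
  case False
  hence lt: "y < c" using ne by simp
  obtain z where z: "y < z" "z < c" "g c - g y = (c - y) * g' z"
    using MVT2[OF lt, of g g'] d1 y by force
  obtain w where w: "z < w" "w < c" "g' c - g' z = (c - z) * g'' w"
    using MVT2[OF z(2), of g' g''] d2 y z by force
  have "g y - g c - g' c * (y - c) = (c - y) * (g' c - g' z)"
    using z(3) by (simp add: algebra_simps)
  also have "\<dots> = ((c - y) * (c - z)) * g'' w" using w(3) by simp
  finally have "g y - g c - g' c * (y - c) = ((c - y) * (c - z)) * g'' w" .
  moreover have "(c - y) * (c - z) > 0" using lt z by simp
  ultimately show ?thesis using w y z by (intro exI[of _ w] conjI exI[of _ "(c - y) * (c - z)"]) auto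
qed

lemma jensen_gap:
  fixes g g' g'' :: "real \<Rightarrow> real" and p x :: "nat \<Rightarrow> real"
  assumes d1: "\<And>y. y>0 \<Longrightarrow> (g has_real_derivative g' y) (at y)"
    and d2: "\<And>y. y>0 \<Longrightarrow> (g' has_real_derivative g'' y) (at y)"
    and A: "finite A" "A \<noteq> {}"
    and pp: "\<And>i. i \<in> A \<Longrightarrow> p i > 0" and ps: "sum p A = 1"
    and xp: "\<And>i. i \<in> A \<Longrightarrow> x i > 0"
  shows "g'' ` {0<..} \<subseteq> {0..} \<Longrightarrow> g (\<Sum>i\<in>A. p i * x i) \<le> (\<Sum>i\<in>A. p i * g (x i))"
    and "g'' ` {0<..} \<subseteq> {0<..} \<Longrightarrow> (\<exists>i\<in>A. \<exists>j\<in>A. x i \<noteq> x j) \<Longrightarrow>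
         g (\<Sum>i\<in>A. p i * x i) < (\<Sum>i\<in>A. p i * g (x i))"
proof -
  define m where "m = (\<Sum>i\<in>A. p i * x i)"
  have mpos: "m > 0" unfolding m_def using A pp xp
    by (intro sum_pos) (auto intro: mult_pos_pos)
  have lin: "(\<Sum>i\<in>A. p i * (g m + g' m * (x i - m))) = g m"
  proof -
    have "(\<Sum>i\<in>A. p i * (g m + g' m * (x i - m))) =
          g m * sum p A + g' m * ((\<Sum>i\<in>A. p i * x i) - m * sum p A)"
      by (simp add: algebra_simps sum.distrib sum_subtractf sum_distrib_left)
    then show ?thesis using ps m_def by simp
  qed
  have tl: "g m + g' m * (x i - m) \<le> g (x i)" if iA: "i \<in> A" and hh: "g'' ` {0<..} \<subseteq> {0..}" for i
  proof (cases "x i = m")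
    case False
    then obtain w k where "w > 0" "k > 0" "g (x i) - g m - g' m * (x i - m) = k * g'' w"
      using tangent[OF d1 d2 mpos xp[OF iA]] by blast
    moreover have "g'' w \<ge> 0" using hh \<open>w>0\<close> by auto
    ultimately show ?thesis by (smt (verit) mult_nonneg_nonneg)
  qed simp
  show "g'' ` {0<..} \<subseteq> {0..} \<Longrightarrow> g (\<Sum>i\<in>A. p i * x i) \<le> (\<Sum>i\<in>A. p i * g (x i))"
  proof -
    assume h: "g'' ` {0<..} \<subseteq> {0..}"
    have "(\<Sum>i\<in>A. p i * (g m + g' m * (x i - m))) \<le> (\<Sum>i\<in>A. p i * g (x i))"
      using tl[OF _ h] pp by (intro sum_mono mult_left_mono) (auto simp: less_imp_le)
    then show ?thesis using lin m_def by simp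
  qed
  show "g'' ` {0<..} \<subseteq> {0<..} \<Longrightarrow> (\<exists>i\<in>A. \<exists>j\<in>A. x i \<noteq> x j) \<Longrightarrow>
         g (\<Sum>i\<in>A. p i * x i) < (\<Sum>i\<in>A. p i * g (x i))"
  proof -
    assume h: "g'' ` {0<..} \<subseteq> {0<..}" and ex: "\<exists>i\<in>A. \<exists>j\<in>A. x i \<noteq> x j"
    have h': "g'' ` {0<..} \<subseteq> {0..}" using h by auto
    obtain i where i: "i \<in> A" "x i \<noteq> m" using ex by metis
    obtain w k where "w > 0" "k > 0" "g (x i) - g m - g' m * (x i - m) = k * g'' w"
      using tangent[OF d1 d2 mpos xp[OF i(1)] i(2)] by blast
    moreover have "g'' w > 0" using h \<open>w>0\<close> by auto
    ultimately have "g m + g' m * (x i - m) < g (x i)" by (smt (verit) mult_pos_pos)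
    hence "p i * (g m + g' m * (x i - m)) < p i * g (x i)" using pp[OF i(1)] by simp
    moreover have "\<forall>j\<in>A. p j * (g m + g' m * (x j - m)) \<le> p j * g (x j)"
      using tl[OF _ h'] pp by (auto intro: mult_left_mono simp: less_imp_le)
    ultimately have "(\<Sum>i\<in>A. p i * (g m + g' m * (x i - m))) < (\<Sum>i\<in>A. p i * g (x i))"
      using A i(1) by (intro sum_strict_mono_ex1) auto
    then show ?thesis using lin m_def by simp
  qed
qed


definition phi :: "real \<Rightarrow> real \<Rightarrow> real" where
  "phi s y = (if s = 0 then - ln y else if s = 1 then y * ln y else y powr s / (s * (s - 1)))"
definition phi1 :: "real \<Rightarrow> real \<Rightarrow> real" where
  "phi1 s y = (if s = 0 then - 1 / y else if s = 1 then ln y + 1 else y powr (s - 1) / (s - 1))"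

lemma phi_d1: "y > 0 \<Longrightarrow> (phi s has_real_derivative phi1 s y) (at y)"
proof -
  assume y: "y > 0"
  consider "s = 0" | "s = 1" | "s \<noteq> 0" "s \<noteq> 1" by blast
  then show ?thesis
  proof cases
    case 1 then show ?thesis unfolding phi_def[abs_def] phi1_def using y
      by (auto intro!: derivative_eq_intros simp: field_simps)
  next
    case 2 then show ?thesis unfolding phi_def[abs_def] phi1_def using y
      by (auto intro!: derivative_eq_intros simp: field_simps)
  next
    case 3
    have "((\<lambda>y. y powr s / (s * (s - 1))) has_real_derivative (s * y powr (s - 1)) / (s * (s - 1))) (at y)"
      by (rule DERIV_cdivide[OF has_real_derivative_powr]) (use y in simp)
    then show ?thesis unfolding phi_def[abs_def] phi1_def using 3 by simp
  qed
qed

lemma phi_d2: "y > 0 \<Longrightarrow> (phi1 s has_real_derivative y powr (s - 2)) (at y)"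
proof -
  assume y: "y > 0"
  consider "s = 0" | "s = 1" | "s \<noteq> 0" "s \<noteq> 1" by blast
  then show ?thesis
  proof cases
    case 1
    have "((\<lambda>y. - 1 / y) has_real_derivative 1 / y^2) (at y)"
      using y by (auto intro!: derivative_eq_intros simp: field_simps power2_eq_square)
    moreover have "y powr (0 - 2) = 1 / y^2" using y by (simp add: powr_minus powr_numeral divide_inverse)
    ultimately show ?thesis unfolding phi1_def[abs_def] using 1 by simp
  next
    case 2
    have "((\<lambda>y. ln y + 1) has_real_derivative 1 / y) (at y)"
      using y by (auto intro!: derivative_eq_intros)
    moreover have "y powr (1 - 2) = 1 / y" using y by (simp add: powr_minus divide_inverse)
    ultimately show ?thesis unfolding phi1_def[abs_def] using 2 by simp
  next
    case 3
    have "((\<lambda>y. y powr (s - 1) / (s - 1)) has_real_derivative ((s - 1) * y powr (s - 1 - 1)) / (s - 1)) (at y)"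
      by (rule DERIV_cdivide[OF has_real_derivative_powr]) (use y in simp)
    then show ?thesis unfolding phi1_def[abs_def] using 3 by simp
  qed
qed

lemma chi_eq: "chi n p x s = (\<Sum>i=1..n. p i * phi s (x i)) - phi s (\<Sum>i=1..n. p i * x i)"
  unfolding chi_def phi_def
  by (auto simp: sum_negf sum_divide_distrib[symmetric] diff_divide_distrib mult.assoc)



context
  fixes n :: nat and p x :: "nat \<Rightarrow> real"
  assumes n2: "n \<ge> 2"
    and pp: "\<And>i. i \<in> {1..n} \<Longrightarrow> p i > 0"
    and ps: "(\<Sum>i=1..n. p i) = 1"
    and xp: "\<And>i. i \<in> {1..n} \<Longrightarrow> x i > 0"
    and ne: "\<exists>i\<in>{1..n}. \<exists>j\<in>{1..n}. x i \<noteq> x j"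
begin

lemma chi_pos: "chi n p x s > 0"
proof -
  have "phi s (\<Sum>i=1..n. p i * x i) < (\<Sum>i=1..n. p i * phi s (x i))"
    using n2 by (intro jensen_gap(2)[OF phi_d1 phi_d2 _ _ pp ps xp _ ne]) auto
  then show ?thesis unfolding chi_eq by simp
qed

lemma chi_logconv:
  assumes l: "0 < l" "l < 1"
  shows "chi n p x (l * a + (1 - l) * b) \<le> chi n p x a powr l * chi n p x b powr (1 - l)"
proof -
  define m where "m = l * a + (1 - l) * b"
  define Ca where "Ca = chi n p x a"
  define Cb where "Cb = chi n p x b"
  define K where "K = Ca powr l * Cb powr (1 - l)"
  define A where "A = K / Ca"
  define B where "B = K / Cb"
  have Ca: "Ca > 0" and Cb: "Cb > 0" unfolding Ca_def Cb_def by (auto intro: chi_pos)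
  have K: "K > 0" unfolding K_def using Ca Cb by simp
  have AB: "A powr l * B powr (1 - l) = 1"
    unfolding A_def B_def using Ca Cb K
    by (simp add: powr_divide powr_add[symmetric] K_def[symmetric])
  have Apos: "A > 0" and Bpos: "B > 0" unfolding A_def B_def using K Ca Cb by auto
  define G where "G y = l * A * phi a y + (1 - l) * B * phi b y - phi m y" for y
  define G1 where "G1 y = l * A * phi1 a y + (1 - l) * B * phi1 b y - phi1 m y" for y
  define G2 where "G2 y = l * A * y powr (a - 2) + (1 - l) * B * y powr (b - 2) - y powr (m - 2)" for y
  have d1: "(G has_real_derivative G1 y) (at y)" if "y > 0" for y
    unfolding G_def[abs_def] G1_def using that
    by (intro DERIV_diff DERIV_add DERIV_cmult phi_d1)
  have d2: "(G1 has_real_derivative G2 y) (at y)" if "y > 0" for y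
    unfolding G1_def[abs_def] G2_def using that
    by (intro DERIV_diff DERIV_add DERIV_cmult phi_d2)
  have G2nn: "G2 ` {0<..} \<subseteq> {0..}"
  proof
    fix z assume "z \<in> G2 ` {0<..}"
    then obtain y where y: "y > 0" and z: "z = G2 y" by auto
    have "(A * y powr (a - 2)) powr l * (B * y powr (b - 2)) powr (1 - l)
          \<le> l * (A * y powr (a - 2)) + (1 - l) * (B * y powr (b - 2))"
      using l y Ca Cb K unfolding A_def B_def
      by (intro Youngs_inequality_0) auto
    moreover have "(A * y powr (a - 2)) powr l * (B * y powr (b - 2)) powr (1 - l)
          = (A powr l * B powr (1 - l)) * (y powr ((a - 2) * l) * y powr ((b - 2) * (1 - l)))"
      using y Apos Bpos by (simp add: powr_mult powr_powr)
    moreover have "y powr ((a - 2) * l) * y powr ((b - 2) * (1 - l)) = y powr (m - 2)"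
      unfolding m_def by (simp add: powr_add[symmetric] algebra_simps)
    ultimately show "z \<in> {0..}" using AB unfolding z G2_def by simp
  qed
  have "G (\<Sum>i=1..n. p i * x i) \<le> (\<Sum>i=1..n. p i * G (x i))"
    using n2 by (intro jensen_gap(1)[OF d1 d2 _ _ pp ps xp G2nn]) auto
  moreover have "(\<Sum>i=1..n. p i * G (x i)) - G (\<Sum>i=1..n. p i * x i)
     = l * A * Ca + (1 - l) * B * Cb - chi n p x m"
    unfolding G_def Ca_def Cb_def chi_eq
    by (simp add: algebra_simps sum.distrib sum_subtractf sum_distrib_left)
  moreover have "l * A * Ca + (1 - l) * B * Cb = K"
  proof -
    have "A * Ca = K" "B * Cb = K" unfolding A_def B_def using Ca Cb by auto
    then show ?thesis by (simp add: algebra_simps)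
  qed
  ultimately show ?thesis unfolding m_def[symmetric] K_def Ca_def Cb_def by linarith
qed

lemma chi_main:
  assumes r: "r > 0"
  shows "chi n p x s * chi n p x (s + r + 1) \<ge> chi n p x (s + 1) * chi n p x (s + r)"
proof -
  define l where "l = r / (r + 1)"
  define u where "u = 1 / (r + 1)"
  have l: "0 < l" "l < 1" unfolding l_def using r by auto
  have u: "0 < u" "u < 1" unfolding u_def using r by auto
  have h1: "(r + 1) * l = r" and h2: "(r + 1) * (1 - l) = 1"
    unfolding l_def using r by (simp_all add: field_simps)
  have "(r + 1) * (l * s + (1 - l) * (s + r + 1)) = ((r + 1) * l) * s + ((r + 1) * (1 - l)) * (s + r + 1)"
    by (simp add: algebra_simps)
  also have "\<dots> = (r + 1) * (s + 1)" unfolding h1 h2 by (simp add: algebra_simps)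
  finally have e1: "l * s + (1 - l) * (s + r + 1) = s + 1" using r by simp
  have h3: "(r + 1) * u = 1" and h4: "(r + 1) * (1 - u) = r"
    unfolding u_def using r by (simp_all add: field_simps)
  have "(r + 1) * (u * s + (1 - u) * (s + r + 1)) = ((r + 1) * u) * s + ((r + 1) * (1 - u)) * (s + r + 1)"
    by (simp add: algebra_simps)
  also have "\<dots> = (r + 1) * (s + r)" unfolding h3 h4 by (simp add: algebra_simps)
  finally have e2: "u * s + (1 - u) * (s + r + 1) = s + r" using r by simp
  let ?a = "chi n p x s" and ?b = "chi n p x (s + r + 1)"
  have A: "chi n p x (s + 1) \<le> ?a powr l * ?b powr (1 - l)"
    using chi_logconv[OF l, of s "s + r + 1"] e1 by simp
  have B: "chi n p x (s + r) \<le> ?a powr u * ?b powr (1 - u)"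
    using chi_logconv[OF u, of s "s + r + 1"] e2 by simp
  have "chi n p x (s + 1) * chi n p x (s + r) \<le> (?a powr l * ?b powr (1 - l)) * (?a powr u * ?b powr (1 - u))"
    using A B chi_pos by (intro mult_mono) (auto intro: less_imp_le)
  also have "\<dots> = (?a powr l * ?a powr u) * (?b powr (1 - l) * ?b powr (1 - u))"
    by (simp only: mult_ac)
  also have "\<dots> = ?a powr (l + u) * ?b powr ((1 - l) + (1 - u))"
    by (simp only: powr_add)
  also have "l + u = 1" unfolding l_def u_def using r by (simp add: field_simps)
  also have "(1 - l) + (1 - u) = 1" using \<open>l + u = 1\<close> by simp
  finally show ?thesis using chi_pos[of s] chi_pos[of "s + r + 1"] by simp
qed

end


theorem mainTheorem6:
  fixes n :: nat and p x :: "nat \<Rightarrow> real"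
  assumes "n \<ge> 2"
    and "\<And>i. i \<in> {1..n} \<Longrightarrow> p i > 0"
    and "(\<Sum>i=1..n. p i) = 1"
    and "\<And>i. i \<in> {1..n} \<Longrightarrow> x i > 0"
    and "\<exists>i\<in>{1..n}. \<exists>j\<in>{1..n}. x i \<noteq> x j"
  shows "(\<forall>s. chi n p x s > 0)
         \<and> mono (\<lambda>s. chi n p x (s + 1) / chi n p x s)
         \<and> (\<forall>s r. r > 0 \<longrightarrow>
              chi n p x s * chi n p x (s + r + 1) \<ge> chi n p x (s + 1) * chi n p x (s + r))"
proof (intro conjI allI impI)
  have pos: "chi n p x s > 0" for s
    by (rule chi_pos) (use assms in auto)
  have main: "chi n p x s * chi n p x (s + r + 1) \<ge> chi n p x (s + 1) * chi n p x (s + r)"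
    if "r > 0" for s r
    by (rule chi_main) (use assms that in auto)
  show "chi n p x s > 0" for s by (rule pos)
  show "chi n p x s * chi n p x (s + r + 1) \<ge> chi n p x (s + 1) * chi n p x (s + r)" if "r > 0" for s r
    using main[OF that] by simp
  show "mono (\<lambda>s. chi n p x (s + 1) / chi n p x s)"
  proof (rule monoI)
    fix s t :: real assume st: "s \<le> t"
    show "chi n p x (s + 1) / chi n p x s \<le> chi n p x (t + 1) / chi n p x t"
    proof (cases "s = t")
      case False
      hence "t - s > 0" using st by simp
      from main[OF this, of s] have "chi n p x (s + 1) * chi n p x t \<le> chi n p x s * chi n p x (t + 1)"
        by (simp add: algebra_simps)
      then show ?thesis using pos[of s] pos[of t] by (simp add: divide_simps mult.commute)
    qed simp
  qed
qed

end
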